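(* For any $\rho>0$ and $n\in\mathbb{N}$, the following randomized test $\texttt{DPBern}$ satisfies $\rho$-zCDP (with respect to datasets of $n$ rows $(x_i,y_i)\in\mathbb{R}^2$, $n$ public). Input: data $(x_1,y_1),\dots,(x_n,y_n)$, $\rho>0$, and a significance level $\alpha\in(0,1)$. Choose a uniformly random permutation $\tau$ of $[n]$, let $n_s=\lfloor n/2\rfloor$ and $s=0$. For $i=1,\dots,n_s$: if $x_{\tau(n_s+i)}\ne x_{\tau(i)}$, add $\mathbb{1}\{(y_{\tau(n_s+i)}-y_{\tau(i)})/(x_{\tau(n_s+i)}-x_{\tau(i)})>0\}$ to $s$; otherwise add an independent $\mathrm{Bern}(1/2)$ sample to $s$. Then replace $s$ by $s+\mathcal{N}(0,\frac1{2\rho})$. Let $N_{\alpha/2},N_{1-\alpha/2}$ be the $\alpha/2$ and $1-\alpha/2$ quantiles of $\mathcal{N}(n_s/2,\ n_s/4+\frac1{2\rho})$. Output "reject the null" if $s\notin(N_{\alpha/2},N_{1-\alpha/2})$ and "fail to reject the null" otherwise.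
   Context: Two datasets of $n$ rows are neighboring if they differ in exactly one row. A randomized mechanism $\mathcal{M}$ satisfies $\rho$-zCDP if for all neighboring datasets $\mathbf{x},\mathbf{x}'$ and all $\alpha'\in(1,\infty)$, $D_{\alpha'}(\mathcal{M}(\mathbf{x})\|\mathcal{M}(\mathbf{x}'))\le\rho\alpha'$, where $D_{\alpha'}$ is the Rényi divergence of order $\alpha'$. *)

theory Defs
  imports "HOL-Probability.Probability"
begin

definition renyi_div :: "real \<Rightarrow> 'b::finite pmf \<Rightarrow> 'b pmf \<Rightarrow> ereal" where
  "renyi_div a P Q =
     (if \<exists>w. pmf Q w = 0 \<and> pmf P w > 0 then \<infinity>
      else ereal (ln (\<Sum>w\<in>UNIV. pmf P w powr a * pmf Q w powr (1 - a)) / (a - 1)))"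

definition neighboring :: "nat \<Rightarrow> 'r list \<Rightarrow> 'r list \<Rightarrow> bool" where
  "neighboring n xs ys \<longleftrightarrow> length xs = n \<and> length ys = n \<and>
     card {i. i < n \<and> xs ! i \<noteq> ys ! i} = 1"

definition zCDP :: "real \<Rightarrow> nat \<Rightarrow> ('r list \<Rightarrow> 'b::finite pmf) \<Rightarrow> bool" where
  "zCDP \<rho> n M \<longleftrightarrow> (\<forall>xs ys. neighboring n xs ys \<longrightarrow>
     (\<forall>a::real. a > 1 \<longrightarrow> renyi_div a (M xs) (M ys) \<le> ereal (\<rho> * a)))"

(* Gaussian N(mu, sigma^2) as a measure, sigma = standard deviation *)
definition gauss :: "real \<Rightarrow> real \<Rightarrow> real measure" where
  "gauss \<mu> \<sigma> = density lborel (normal_density \<mu> \<sigma>)"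

definition gauss_quantile :: "real \<Rightarrow> real \<Rightarrow> real \<Rightarrow> real" where
  "gauss_quantile \<mu> \<sigma> q = Inf {t. q \<le> measure (gauss \<mu> \<sigma>) {..t}}"

(* Distribution of the un-noised statistic s (0-based indices; pair i with n_s + i) *)
definition dpbern_stat :: "(real \<times> real) list \<Rightarrow> real pmf" where
  "dpbern_stat d =
     (let n = length d; ns = n div 2 in
      bind_pmf (pmf_of_set {\<tau>. \<tau> permutes {..<n}}) (\<lambda>\<tau>.
      bind_pmf (Pi_pmf {..<ns} False (\<lambda>_. bernoulli_pmf (1/2))) (\<lambda>c.
      return_pmf (\<Sum>i<ns.
         (let (x1, y1) = d ! (\<tau> i); (x2, y2) = d ! (\<tau> (ns + i)) in
          if x2 \<noteq> x1 then (if (y2 - y1) / (x2 - x1) > 0 then 1 else 0)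
          else (if c i then 1 else 0))))))"

(* DPBern output: True = "reject the null", False = "fail to reject".
   s + N(0, 1/(2 rho)) is rejected iff it lies outside (N_{a/2}, N_{1-a/2}), so the output
   given s is Bernoulli with the Gaussian probability of that event. *)
definition dpbern :: "real \<Rightarrow> real \<Rightarrow> (real \<times> real) list \<Rightarrow> bool pmf" where
  "dpbern \<rho> \<alpha> d =
     (let ns = length d div 2;
          \<sigma>q = sqrt (real ns / 4 + 1 / (2 * \<rho>));
          lo = gauss_quantile (real ns / 2) \<sigma>q (\<alpha> / 2);
          hi = gauss_quantile (real ns / 2) \<sigma>q (1 - \<alpha> / 2)
      in bind_pmf (dpbern_stat d) (\<lambda>s.
           bernoulli_pmf (measure (gauss s (sqrt (1 / (2 * \<rho>)))) (- {lo<..<hi}))))"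

end

theory Submission
  imports Defs
begin


lemma tangent_powr:
  fixes a t r :: real
  assumes "a > 1" "t > 0" "r > 0"
  shows "r powr a + a * r powr (a - 1) * (t - r) \<le> t powr a"
proof -
  have "t powr a - r powr a \<ge> (a * r powr (a - 1)) * (t - r)"
  proof (rule convex_on_imp_above_tangent[where A="{0<..}"])
    show "convex_on {0<..} (\<lambda>x. x powr a)" using assms by (intro powr_convex) simp
    show "connected ({0<..}::real set)" by simp
    show "r \<in> interior {0<..}" using assms by (simp add: interior_open)
    show "t \<in> {0<..}" using assms by simp
    show "((\<lambda>x. x powr a) has_real_derivative a * r powr (a - 1)) (at r within {0<..})"
      using assms by (intro has_field_derivative_at_within[OF has_real_derivative_powr])
  qed
  then show ?thesis by simp
qed
lemma tangent2:
  fixes a f g r :: real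
  assumes "a > 1" "f > 0" "g > 0" "r > 0"
  shows "a * r powr (a - 1) * f + (1 - a) * r powr a * g \<le> f powr a * g powr (1 - a)"
proof -
  have t: "r powr a + a * r powr (a - 1) * (f / g - r) \<le> (f / g) powr a"
    using tangent_powr[OF assms(1) _ assms(4), of "f/g"] assms by simp
  have e1: "(f / g) powr a * g = f powr a * g powr (1 - a)"
    using assms by (simp add: powr_divide powr_diff)
  have e2: "r powr a = r powr (a - 1) * r"
    using assms by (simp add: powr_diff)
  have "(r powr a + a * r powr (a - 1) * (f / g - r)) * g \<le> (f / g) powr a * g"
    using t assms by (intro mult_right_mono) auto
  moreover have "(r powr a + a * r powr (a - 1) * (f / g - r)) * g =
     a * r powr (a - 1) * f + (1 - a) * r powr a * g"
    using assms by (simp add: e2 field_simps)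
  ultimately show ?thesis using e1 by simp
qed

lemma gauss_prob_space: "\<sigma> > 0 \<Longrightarrow> prob_space (gauss s \<sigma>)"
  unfolding gauss_def by (rule prob_space_normal_density)

lemma sets_gauss[simp]: "sets (gauss s \<sigma>) = sets borel"
  unfolding gauss_def by simp

lemma space_gauss[simp]: "space (gauss s \<sigma>) = UNIV"
  unfolding gauss_def by simp

lemma gauss_meas:
  assumes "A \<in> sets borel"
  shows "measure (gauss s \<sigma>) A = (\<integral>x. normal_density s \<sigma> x * indicator A x \<partial>lborel)"
proof -
  have "measure (gauss s \<sigma>) A = integral\<^sup>L (gauss s \<sigma>) (indicator A)"
    by simp
  also have "\<dots> = (\<integral>x. normal_density s \<sigma> x *\<^sub>R indicator A x \<partial>lborel)"
    unfolding gauss_def using assms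
    by (intro integral_density) auto
  finally show ?thesis by simp
qed

lemma aux_l: "D \<noteq> 0 \<Longrightarrow> a * (L + (-(Y) / D)) + (1 - a) * (L + (-(Z) / D))
       = L - (a * Y + (1 - a) * Z) / D" for a L D Y Z :: real
  by (simp add: field_simps)

lemma aux_r: "D \<noteq> 0 \<Longrightarrow> c / D + (L + (-(W) / D)) = L - (W - c) / D" for c L D W :: real
  by (simp add: field_simps)

lemma aux_poly: "a * (x - s)\<^sup>2 + (1 - a) * (x - s')\<^sup>2 = (x - (a * s + (1 - a) * s'))\<^sup>2 - a * (a - 1) * (s - s')\<^sup>2" for a x s s' :: real
  by (simp add: power2_eq_square algebra_simps)

lemma normal_powr_prod:
  fixes s s' a \<sigma> x :: real
  assumes "\<sigma> > 0"
  shows "normal_density s \<sigma> x powr a * normal_density s' \<sigma> x powr (1 - a) =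
    exp (a * (a - 1) * (s - s')\<^sup>2 / (2 * \<sigma>\<^sup>2)) * normal_density (a * s + (1 - a) * s') \<sigma> x"
proof -
  define K where "K = 1 / sqrt (2 * pi * \<sigma>\<^sup>2)"
  define D where "D = 2 * \<sigma>\<^sup>2"
  have D: "D \<noteq> 0" using assms by (simp add: D_def)
  have K: "K > 0" using assms by (simp add: K_def)
  have nd0: "normal_density m \<sigma> x = K * exp (-(x - m)\<^sup>2 / D)" for m
    by (simp only: normal_density_def K_def D_def)
  have nd: "normal_density m \<sigma> x = exp (ln K + (-(x - m)\<^sup>2 / D))" for m
    unfolding nd0 exp_add using K by simp
  have pw: "exp y powr b = exp (b * y)" for y b :: real
    by (simp add: powr_def)
  have "a * (ln K + (-(x - s)\<^sup>2 / D)) + (1 - a) * (ln K + (-(x - s')\<^sup>2 / D))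
      = a * (a - 1) * (s - s')\<^sup>2 / D + (ln K + (-(x - (a * s + (1 - a) * s'))\<^sup>2 / D))"
    unfolding aux_l[OF D] aux_r[OF D] aux_poly ..
  then have "exp (a * (ln K + (-(x - s)\<^sup>2 / D))) * exp ((1 - a) * (ln K + (-(x - s')\<^sup>2 / D)))
      = exp (a * (a - 1) * (s - s')\<^sup>2 / D) * exp (ln K + (-(x - (a * s + (1 - a) * s'))\<^sup>2 / D))"
    by (simp only: exp_add[symmetric])
  then show ?thesis
    unfolding nd pw D_def by simp
qed


lemma gauss_tangent:
  fixes a r s s' \<sigma> :: real
  assumes "\<sigma> > 0" "a > 1" "r > 0" "A \<in> sets borel"
  shows "a * r powr (a - 1) * measure (gauss s \<sigma>) A + (1 - a) * r powr a * measure (gauss s' \<sigma>) A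
    \<le> exp (a * (a - 1) * (s - s')\<^sup>2 / (2 * \<sigma>\<^sup>2)) * measure (gauss (a * s + (1 - a) * s') \<sigma>) A"
proof -
  let ?f = "normal_density s \<sigma>" and ?g = "normal_density s' \<sigma>"
  let ?c = "exp (a * (a - 1) * (s - s')\<^sup>2 / (2 * \<sigma>\<^sup>2))"
  have i1: "integrable lborel (\<lambda>x. ?f x * indicator A x)"
    using assms by (intro integrable_real_mult_indicator) auto
  have i2: "integrable lborel (\<lambda>x. ?g x * indicator A x)"
    using assms by (intro integrable_real_mult_indicator) auto
  have i3: "integrable lborel (\<lambda>x. normal_density (a * s + (1 - a) * s') \<sigma> x * indicator A x)"
    using assms by (intro integrable_real_mult_indicator) auto
  have "a * r powr (a - 1) * measure (gauss s \<sigma>) A + (1 - a) * r powr a * measure (gauss s' \<sigma>) A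
     = (\<integral>x. a * r powr (a - 1) * (?f x * indicator A x) + (1 - a) * r powr a * (?g x * indicator A x) \<partial>lborel)"
    using i1 i2 assms(4) by (simp add: gauss_meas)
  also have "\<dots> \<le> (\<integral>x. ?c * (normal_density (a * s + (1 - a) * s') \<sigma> x * indicator A x) \<partial>lborel)"
  proof (rule integral_mono)
    show "integrable lborel (\<lambda>x. a * r powr (a - 1) * (?f x * indicator A x) + (1 - a) * r powr a * (?g x * indicator A x))"
      using i1 i2 by auto
    show "integrable lborel (\<lambda>x. ?c * (normal_density (a * s + (1 - a) * s') \<sigma> x * indicator A x))"
      using i3 by auto
    fix x
    show "a * r powr (a - 1) * (?f x * indicator A x) + (1 - a) * r powr a * (?g x * indicator A x)
      \<le> ?c * (normal_density (a * s + (1 - a) * s') \<sigma> x * indicator A x)"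
    proof (cases "x \<in> A")
      case True
      have "a * r powr (a - 1) * ?f x + (1 - a) * r powr a * ?g x \<le> ?f x powr a * ?g x powr (1 - a)"
        using assms by (intro tangent2) (auto intro: normal_density_pos)
      then show ?thesis using True assms by (simp add: normal_powr_prod)
    qed simp
  qed
  also have "\<dots> = ?c * measure (gauss (a * s + (1 - a) * s') \<sigma>) A"
    using assms(4) by (simp add: gauss_meas)
  finally show ?thesis .
qed

lemma gauss_null:
  assumes "\<sigma> > 0" "A \<in> sets borel" "measure (gauss s \<sigma>) A = 0"
  shows "measure (gauss t \<sigma>) A = 0"
proof -
  interpret p1: prob_space "gauss s \<sigma>" using assms(1) by (rule gauss_prob_space)
  interpret p2: prob_space "gauss t \<sigma>" using assms(1) by (rule gauss_prob_space)
  have "A \<in> null_sets (gauss s \<sigma>)"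
    using assms p1.emeasure_eq_measure by (auto intro!: null_setsI)
  then have "AE x in lborel. x \<in> A \<longrightarrow> normal_density s \<sigma> x = 0"
    unfolding gauss_def by (subst (asm) null_sets_density_iff) auto
  then have "AE x in lborel. x \<in> A \<longrightarrow> normal_density t \<sigma> x = 0"
  proof eventually_elim
    case (elim x)
    have "normal_density s \<sigma> x > 0" by (rule normal_density_pos[OF assms(1)])
    then show ?case using elim by simp
  qed
  then have "A \<in> null_sets (gauss t \<sigma>)"
    unfolding gauss_def using assms by (subst null_sets_density_iff) auto
  then show ?thesis by (simp add: measure_eq_0_null_sets)
qed

lemma pmf_integrable_bounded:
  fixes f :: "'k \<Rightarrow> real"
  assumes "\<And>k. k \<in> set_pmf \<mu> \<Longrightarrow> \<bar>f k\<bar> \<le> B"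
  shows "integrable (measure_pmf \<mu>) f"
  by (rule measure_pmf.integrable_const_bound[where B=B]) (use assms in \<open>auto simp: AE_measure_pmf_iff\<close>)

lemma powr_combine:
  fixes P Q a :: real
  assumes "P > 0" "Q > 0"
  shows "a * (P / Q) powr (a - 1) * P + (1 - a) * (P / Q) powr a * Q = P powr a * Q powr (1 - a)"
proof -
  have e1: "(P / Q) powr (a - 1) * P = P powr a * Q powr (1 - a)"
    using assms by (simp add: powr_divide powr_diff)
  have e2: "(P / Q) powr a * Q = P powr a * Q powr (1 - a)"
    using assms by (simp add: powr_divide powr_diff)
  have "a * (P / Q) powr (a - 1) * P + (1 - a) * (P / Q) powr a * Q
      = a * ((P / Q) powr (a - 1) * P) + (1 - a) * ((P / Q) powr a * Q)" by (simp add: algebra_simps)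
  also have "\<dots> = P powr a * Q powr (1 - a)" unfolding e1 e2 by (simp add: algebra_simps)
  finally show ?thesis .
qed

lemma core:
  fixes \<mu> :: "'k pmf" and S S' :: "'k \<Rightarrow> real" and B :: "real set" and a \<sigma> :: real
  assumes \<sigma>: "\<sigma> > 0" and a: "a > 1" and B: "B \<in> sets borel"
    and close: "\<And>k. k \<in> set_pmf \<mu> \<Longrightarrow> \<bar>S k - S' k\<bar> \<le> 1"
  defines "A \<equiv> \<lambda>w. if w then - B else B"
  defines "P \<equiv> \<lambda>w. \<integral>k. measure (gauss (S k) \<sigma>) (A w) \<partial>measure_pmf \<mu>"
  defines "Q \<equiv> \<lambda>w. \<integral>k. measure (gauss (S' k) \<sigma>) (A w) \<partial>measure_pmf \<mu>"
  shows "(\<forall>w. Q w = 0 \<longrightarrow> P w = 0) \<and>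
         (\<Sum>w\<in>UNIV. P w powr a * Q w powr (1 - a)) \<le> exp (a * (a - 1) / (2 * \<sigma>\<^sup>2))"
proof -
  have Aw: "A w \<in> sets borel" for w using B by (auto simp: A_def)
  have ps: "prob_space (gauss t \<sigma>)" for t using \<sigma> by (rule gauss_prob_space)
  have m01: "0 \<le> measure (gauss t \<sigma>) X \<and> measure (gauss t \<sigma>) X \<le> 1" for t X
    using prob_space.prob_le_1[OF ps] by simp
  have intm: "integrable (measure_pmf \<mu>) (\<lambda>k. measure (gauss (T k) \<sigma>) X)" for T X
    by (rule pmf_integrable_bounded[where B=1]) (use m01 in auto)
  have Pnn: "P w \<ge> 0" for w unfolding P_def using m01 by (intro Bochner_Integration.integral_nonneg) auto
  have Qnn: "Q w \<ge> 0" for w unfolding Q_def using m01 by (intro Bochner_Integration.integral_nonneg) auto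
  have null: "Q w = 0 \<longrightarrow> P w = 0" for w
  proof
    assume "Q w = 0"
    then have "AE k in measure_pmf \<mu>. measure (gauss (S' k) \<sigma>) (A w) = 0"
      unfolding Q_def using m01 by (subst (asm) integral_nonneg_eq_0_iff_AE) (auto intro: intm)
    then have z: "\<forall>k\<in>set_pmf \<mu>. measure (gauss (S' k) \<sigma>) (A w) = 0"
      by (simp add: AE_measure_pmf_iff)
    obtain k0 where "k0 \<in> set_pmf \<mu>" using set_pmf_not_empty[of \<mu>] by blast
    with z have "measure (gauss (S' k0) \<sigma>) (A w) = 0" by blast
    then have "measure (gauss t \<sigma>) (A w) = 0" for t using gauss_null[OF \<sigma> Aw] by blast
    then show "P w = 0" unfolding P_def by simp
  qed
  define E where "E = exp (a * (a - 1) / (2 * \<sigma>\<^sup>2))"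
  define c where "c = (\<lambda>k. exp (a * (a - 1) * (S k - S' k)\<^sup>2 / (2 * \<sigma>\<^sup>2)))"
  define m where "m = (\<lambda>k. a * S k + (1 - a) * S' k)"
  define \<Phi> where "\<Phi> = (\<lambda>w k. c k * measure (gauss (m k) \<sigma>) (A w))"
  have cE: "0 < c k \<and> c k \<le> E" if "k \<in> set_pmf \<mu>" for k
  proof -
    have "(S k - S' k)\<^sup>2 \<le> 1" using close[OF that]
      by (metis abs_le_square_iff abs_one power_one)
    moreover have "a * (a - 1) / (2 * \<sigma>\<^sup>2) \<ge> 0" using a by simp
    ultimately have "a * (a - 1) * (S k - S' k)\<^sup>2 / (2 * \<sigma>\<^sup>2) \<le> a * (a - 1) / (2 * \<sigma>\<^sup>2)"
      using a \<sigma> by (simp add: divide_right_mono mult_left_le)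
    then show ?thesis unfolding c_def E_def by simp
  qed
  have intPhi: "integrable (measure_pmf \<mu>) (\<Phi> w)" for w
    unfolding \<Phi>_def
  proof (rule pmf_integrable_bounded[where B=E])
    fix k assume k: "k \<in> set_pmf \<mu>"
    have "c k * measure (gauss (m k) \<sigma>) (A w) \<le> E * 1"
      by (intro mult_mono) (use cE[OF k] m01 in auto)
    moreover have "c k * measure (gauss (m k) \<sigma>) (A w) \<ge> 0" using cE[OF k] m01 by simp
    ultimately show "\<bar>c k * measure (gauss (m k) \<sigma>) (A w)\<bar> \<le> E" by simp
  qed
  have Phinn: "\<Phi> w k \<ge> 0" for w k unfolding \<Phi>_def c_def using m01 by simp
  have each: "P w powr a * Q w powr (1 - a) \<le> (\<integral>k. \<Phi> w k \<partial>measure_pmf \<mu>)" for w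
  proof (cases "P w = 0")
    case True
    then show ?thesis using Phinn by (simp add: Bochner_Integration.integral_nonneg)
  next
    case False
    then have Pp: "P w > 0" using Pnn[of w] by simp
    have Qp: "Q w > 0" using null[of w] False Qnn[of w] by fastforce
    define r where "r = P w / Q w"
    have r: "r > 0" using Pp Qp by (simp add: r_def)
    have "P w powr a * Q w powr (1 - a) = a * r powr (a - 1) * P w + (1 - a) * r powr a * Q w"
      unfolding r_def by (rule powr_combine[OF Pp Qp, symmetric])
    also have "\<dots> = (\<integral>k. a * r powr (a - 1) * measure (gauss (S k) \<sigma>) (A w)
                      + (1 - a) * r powr a * measure (gauss (S' k) \<sigma>) (A w) \<partial>measure_pmf \<mu>)"
      unfolding P_def Q_def using intm by simp
    also have "\<dots> \<le> (\<integral>k. \<Phi> w k \<partial>measure_pmf \<mu>)"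
    proof (rule integral_mono)
      show "integrable (measure_pmf \<mu>) (\<lambda>k. a * r powr (a - 1) * measure (gauss (S k) \<sigma>) (A w)
                      + (1 - a) * r powr a * measure (gauss (S' k) \<sigma>) (A w))"
        using intm by simp
      show "integrable (measure_pmf \<mu>) (\<Phi> w)" by (rule intPhi)
      fix k
      show "a * r powr (a - 1) * measure (gauss (S k) \<sigma>) (A w)
                      + (1 - a) * r powr a * measure (gauss (S' k) \<sigma>) (A w) \<le> \<Phi> w k"
        unfolding \<Phi>_def c_def m_def by (rule gauss_tangent[OF \<sigma> a r Aw])
    qed
    finally show ?thesis .
  qed
  have sumPhi: "\<Phi> True k + \<Phi> False k = c k" for k
  proof -
    interpret pg: prob_space "gauss (m k) \<sigma>" by (rule ps)
    have "measure (gauss (m k) \<sigma>) (UNIV - B) = 1 - measure (gauss (m k) \<sigma>) B"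
      using pg.prob_compl[of B] B by simp
    then show ?thesis unfolding \<Phi>_def A_def
      by (simp add: Compl_eq_Diff_UNIV flip: distrib_left)
  qed
  have "(\<Sum>w\<in>UNIV. P w powr a * Q w powr (1 - a))
      = P True powr a * Q True powr (1 - a) + P False powr a * Q False powr (1 - a)"
    by (simp add: UNIV_bool)
  also have "\<dots> \<le> (\<integral>k. \<Phi> True k \<partial>measure_pmf \<mu>) + (\<integral>k. \<Phi> False k \<partial>measure_pmf \<mu>)"
    by (intro add_mono each)
  also have "\<dots> = (\<integral>k. c k \<partial>measure_pmf \<mu>)"
    using intPhi by (simp add: sumPhi flip: Bochner_Integration.integral_add)
  also have "\<dots> \<le> (\<integral>k. E \<partial>measure_pmf \<mu>)"
    using cE by (intro integral_mono_AE) (auto simp: AE_measure_pmf_iff abs_le_iff intro!: pmf_integrable_bounded[where B=E] dest: cE)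
  also have "\<dots> = E" by simp
  finally show ?thesis using null unfolding E_def by blast
qed

definition pterm :: "(real \<times> real) list \<Rightarrow> (nat \<Rightarrow> nat) \<Rightarrow> (nat \<Rightarrow> bool) \<Rightarrow> nat \<Rightarrow> real" where
  "pterm d \<tau> c i =
     (let (x1, y1) = d ! (\<tau> i); (x2, y2) = d ! (\<tau> (length d div 2 + i)) in
          if x2 \<noteq> x1 then (if (y2 - y1) / (x2 - x1) > 0 then 1 else 0)
          else (if c i then 1 else 0))"

definition stat_fun :: "(real \<times> real) list \<Rightarrow> (nat \<Rightarrow> nat) \<times> (nat \<Rightarrow> bool) \<Rightarrow> real" where
  "stat_fun d k = (\<Sum>i<length d div 2. pterm d (fst k) (snd k) i)"

definition mu :: "nat \<Rightarrow> ((nat \<Rightarrow> nat) \<times> (nat \<Rightarrow> bool)) pmf" where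
  "mu n = pair_pmf (pmf_of_set {\<tau>. \<tau> permutes {..<n}}) (Pi_pmf {..<n div 2} False (\<lambda>_. bernoulli_pmf (1/2)))"

lemma stat_map: "dpbern_stat d = map_pmf (stat_fun d) (mu (length d))"
  unfolding dpbern_stat_def mu_def pair_pmf_def map_bind_pmf map_return_pmf Let_def
  by (intro bind_pmf_cong refl) (simp add: stat_fun_def pterm_def Let_def)

lemma pterm_01: "pterm d \<tau> c i = 0 \<or> pterm d \<tau> c i = 1"
  unfolding pterm_def by (simp add: Let_def split: prod.split)

lemma set_mu: "k \<in> set_pmf (mu n) \<Longrightarrow> fst k permutes {..<n}"
proof -
  assume k: "k \<in> set_pmf (mu n)"
  have fin: "finite {\<tau>. \<tau> permutes {..<n}}" by (rule finite_permutations) simp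
  have ne: "{\<tau>. \<tau> permutes {..<n}} \<noteq> {}" using permutes_id by blast
  show ?thesis using k fin ne unfolding mu_def by auto
qed

lemma stat_close:
  assumes nb: "neighboring n xs ys" and k: "k \<in> set_pmf (mu n)"
  shows "\<bar>stat_fun xs k - stat_fun ys k\<bar> \<le> 1"
proof -
  obtain \<tau> c where kk: "k = (\<tau>, c)" by (cases k)
  have perm: "\<tau> permutes {..<n}" using set_mu[OF k] kk by simp
  have len: "length xs = n" "length ys = n" using nb unfolding neighboring_def by auto
  obtain j where J: "{i. i < n \<and> xs ! i \<noteq> ys ! i} = {j}"
  proof -
    have "card {i. i < n \<and> xs ! i \<noteq> ys ! i} = 1" using nb unfolding neighboring_def by blast
    then show ?thesis using that by (rule card_1_singletonE)
  qed
  have eqi: "xs ! i = ys ! i" if "i < n" "i \<noteq> j" for i using J that by blast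
  define ns where "ns = n div 2"
  have inj: "inj \<tau>" using perm by (rule permutes_inj)
  have rng: "\<tau> i < n" if "i < n" for i using permutes_in_image[OF perm, of i] that by simp
  define D where "D = {i\<in>{..<ns}. \<tau> i = j \<or> \<tau> (ns + i) = j}"
  have finD: "finite D" unfolding D_def by simp
  have D1: "card D \<le> 1"
  proof -
    have "\<forall>i1\<in>D. \<forall>i2\<in>D. i1 = i2"
    proof (intro ballI)
      fix i1 i2 assume i1: "i1 \<in> D" and i2: "i2 \<in> D"
      have l1: "i1 < ns" and l2: "i2 < ns" using i1 i2 by (auto simp: D_def)
      have c1: "\<tau> i1 = j \<or> \<tau> (ns + i1) = j" using i1 by (simp add: D_def)
      have c2: "\<tau> i2 = j \<or> \<tau> (ns + i2) = j" using i2 by (simp add: D_def)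
      show "i1 = i2"
      proof (cases "\<tau> i1 = j")
        case T1: True
        show ?thesis
        proof (cases "\<tau> i2 = j")
          case True
          then show ?thesis using T1 injD[OF inj, of i1 i2] by simp
        next
          case False
          then have "\<tau> (ns + i2) = j" using c2 by simp
          then have "i1 = ns + i2" using T1 injD[OF inj, of i1 "ns + i2"] by simp
          then show ?thesis using l1 by simp
        qed
      next
        case F1: False
        then have T1: "\<tau> (ns + i1) = j" using c1 by simp
        show ?thesis
        proof (cases "\<tau> i2 = j")
          case True
          then have "ns + i1 = i2" using T1 injD[OF inj, of "ns + i1" i2] by simp
          then show ?thesis using l2 by simp
        next
          case False
          then have "\<tau> (ns + i2) = j" using c2 by simp
          then have "ns + i1 = ns + i2" using T1 injD[OF inj, of "ns + i1" "ns + i2"] by simp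
          then show ?thesis by simp
        qed
      qed
    qed
    then show ?thesis using finD by (simp add: card_le_Suc0_iff_eq)
  qed
  have same: "pterm xs \<tau> c i = pterm ys \<tau> c i" if "i < ns" "i \<notin> D" for i
  proof -
    have a1: "xs ! (\<tau> i) = ys ! (\<tau> i)"
      using that by (intro eqi rng) (auto simp: D_def ns_def)
    have a2: "xs ! (\<tau> (ns + i)) = ys ! (\<tau> (ns + i))"
      using that by (intro eqi rng) (auto simp: D_def ns_def)
    show ?thesis unfolding pterm_def len ns_def[symmetric] a1 a2 ..
  qed
  have "stat_fun xs k - stat_fun ys k = (\<Sum>i<ns. pterm xs \<tau> c i - pterm ys \<tau> c i)"
    unfolding stat_fun_def kk len ns_def by (simp add: sum_subtractf)
  also have "\<dots> = (\<Sum>i\<in>D. pterm xs \<tau> c i - pterm ys \<tau> c i)"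
    by (rule sum.mono_neutral_right) (use same in \<open>auto simp: D_def\<close>)
  finally have "\<bar>stat_fun xs k - stat_fun ys k\<bar> \<le> (\<Sum>i\<in>D. \<bar>pterm xs \<tau> c i - pterm ys \<tau> c i\<bar>)"
    by (simp add: sum_abs)
  also have "\<dots> \<le> (\<Sum>i\<in>D. 1)"
  proof (rule sum_mono)
    fix i
    show "\<bar>pterm xs \<tau> c i - pterm ys \<tau> c i\<bar> \<le> 1"
      using pterm_01[of xs \<tau> c i] pterm_01[of ys \<tau> c i] by auto
  qed
  also have "\<dots> \<le> 1" using D1 by simp
  finally show ?thesis .
qed

lemma bern_gauss:
  assumes "\<sigma> > 0" "B \<in> sets borel"
  shows "pmf (bernoulli_pmf (measure (gauss s \<sigma>) (- B))) w
       = measure (gauss s \<sigma>) (if w then - B else B)"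
proof -
  interpret pg: prob_space "gauss s \<sigma>" using assms(1) by (rule gauss_prob_space)
  have c: "measure (gauss s \<sigma>) (- B) = 1 - measure (gauss s \<sigma>) B"
    using pg.prob_compl[of B] assms(2) by (simp add: Compl_eq_Diff_UNIV)
  have "0 \<le> measure (gauss s \<sigma>) (- B)" "measure (gauss s \<sigma>) (- B) \<le> 1" by auto
  then show ?thesis using c by (cases w) auto
qed

lemma pmf_dpbern:
  fixes \<rho> \<alpha> :: real and d :: "(real \<times> real) list" and w :: bool
  assumes "\<rho> > 0"
  defines "\<sigma> \<equiv> sqrt (1 / (2 * \<rho>))"
  defines "lo \<equiv> gauss_quantile (real (length d div 2) / 2) (sqrt (real (length d div 2) / 4 + 1 / (2 * \<rho>))) (\<alpha> / 2)"
  defines "hi \<equiv> gauss_quantile (real (length d div 2) / 2) (sqrt (real (length d div 2) / 4 + 1 / (2 * \<rho>))) (1 - \<alpha> / 2)"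
  shows "pmf (dpbern \<rho> \<alpha> d) w =
    (\<integral>k. measure (gauss (stat_fun d k) \<sigma>) (if w then - {lo<..<hi} else {lo<..<hi}) \<partial>measure_pmf (mu (length d)))"
proof -
  have \<sigma>: "\<sigma> > 0" using assms by (simp add: \<sigma>_def)
  have "pmf (dpbern \<rho> \<alpha> d) w =
     (\<integral>k. pmf (bernoulli_pmf (measure (gauss (stat_fun d k) \<sigma>) (- {lo<..<hi}))) w \<partial>measure_pmf (mu (length d)))"
    unfolding dpbern_def Let_def stat_map pmf_bind \<sigma>_def lo_def hi_def by simp
  also have "\<dots> = (\<integral>k. measure (gauss (stat_fun d k) \<sigma>) (if w then - {lo<..<hi} else {lo<..<hi}) \<partial>measure_pmf (mu (length d)))"
    using bern_gauss[OF \<sigma>, of "{lo<..<hi}"] by simp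
  finally show ?thesis .
qed

theorem lemma4p2:
  fixes \<rho> \<alpha> :: real and n :: nat
  assumes "\<rho> > 0" and "0 < \<alpha>" and "\<alpha> < 1"
  shows "zCDP \<rho> n (dpbern \<rho> \<alpha>)"
  unfolding zCDP_def
proof (intro allI impI)
  fix xs ys :: "(real \<times> real) list" and a :: real
  assume nb: "neighboring n xs ys" and a: "a > 1"
  have len: "length xs = n" "length ys = n" using nb unfolding neighboring_def by auto
  define \<sigma> where "\<sigma> = sqrt (1 / (2 * \<rho>))"
  have \<sigma>: "\<sigma> > 0" using assms by (simp add: \<sigma>_def)
  have \<sigma>2: "2 * \<sigma>\<^sup>2 = 1 / \<rho>" using assms by (simp add: \<sigma>_def)
  define lo where "lo = gauss_quantile (real (n div 2) / 2) (sqrt (real (n div 2) / 4 + 1 / (2 * \<rho>))) (\<alpha> / 2)"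
  define hi where "hi = gauss_quantile (real (n div 2) / 2) (sqrt (real (n div 2) / 4 + 1 / (2 * \<rho>))) (1 - \<alpha> / 2)"
  define P where "P = (\<lambda>w. \<integral>k. measure (gauss (stat_fun xs k) \<sigma>) (if w then - {lo<..<hi} else {lo<..<hi}) \<partial>measure_pmf (mu n))"
  define Q where "Q = (\<lambda>w. \<integral>k. measure (gauss (stat_fun ys k) \<sigma>) (if w then - {lo<..<hi} else {lo<..<hi}) \<partial>measure_pmf (mu n))"
  have pP: "pmf (dpbern \<rho> \<alpha> xs) w = P w" for w
    unfolding P_def lo_def hi_def \<sigma>_def using pmf_dpbern[OF assms(1), of \<alpha> xs w] len by simp
  have pQ: "pmf (dpbern \<rho> \<alpha> ys) w = Q w" for w
    unfolding Q_def lo_def hi_def \<sigma>_def using pmf_dpbern[OF assms(1), of \<alpha> ys w] len by simp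
  have C: "(\<forall>w. Q w = 0 \<longrightarrow> P w = 0) \<and>
         (\<Sum>w\<in>UNIV. P w powr a * Q w powr (1 - a)) \<le> exp (a * (a - 1) / (2 * \<sigma>\<^sup>2))"
    unfolding P_def Q_def
    by (rule core[OF \<sigma> a _ stat_close[OF nb]]) auto
  have E: "exp (a * (a - 1) / (2 * \<sigma>\<^sup>2)) = exp (\<rho> * a * (a - 1))"
    unfolding \<sigma>2 by simp
  have nz: "\<not> (\<exists>w. pmf (dpbern \<rho> \<alpha> ys) w = 0 \<and> pmf (dpbern \<rho> \<alpha> xs) w > 0)"
    using C unfolding pP pQ by auto
  define T where "T = (\<Sum>w\<in>UNIV. P w powr a * Q w powr (1 - a))"
  have T0: "T \<ge> 0" unfolding T_def by (intro sum_nonneg) simp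
  have TE: "T \<le> exp (\<rho> * a * (a - 1))" using C E unfolding T_def by simp
  have "ln T \<le> \<rho> * a * (a - 1)"
  proof (cases "T = 0")
    case True then show ?thesis using assms a by simp
  next
    case False
    then have "T > 0" using T0 by simp
    then have "ln T \<le> ln (exp (\<rho> * a * (a - 1)))" using TE by (subst ln_le_cancel_iff) auto
    then show ?thesis by simp
  qed
  then have "ln T / (a - 1) \<le> \<rho> * a" using a by (simp add: divide_le_eq mult.assoc)
  then show "renyi_div a (dpbern \<rho> \<alpha> xs) (dpbern \<rho> \<alpha> ys) \<le> ereal (\<rho> * a)"
    unfolding renyi_div_def using nz by (simp add: pP pQ T_def)
qed

end
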